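(* There is a single algorithm such that for every code $f$ of a Suslin set $P[f]\subseteq X$, the characteristic function of $P[f]$ is computable in $\mathbf S$ and $f$ via this algorithm; i.e. there is an index $e$ with $\{e\}(\mathbf S,f,x)=1$ if $x\in P[f]$ and $=0$ if $x\notin P[f]$, for all codes $f$ and all $x\in X$.
   Context: The Suslin functional $\mathbf S$ is the type-2 functional with $\mathbf S(g)=0$ if $\forall f\in\mathbb N^{\mathbb N}\exists n\,(g(\bar f(n))=0)$ and $\mathbf S(g)=1$ if $\exists f\in\mathbb N^{\mathbb N}\forall n\,(g(\bar f(n))>0)$, where $\bar f(n)=\langle f(0),\dots,f(n-1)\rangle$. Computability is Kleene computability (S1–S9). Suslin sets and their codes: $\mathrm{SEQ}$ finite sequences of naturals; a Suslin scheme is $s\mapsto P_s\subseteq X$ on $\mathrm{SEQ}$, $\mathbf A(\mathbf P)=\bigcup_{f}\bigcap_n P_{\bar f(n)}$; $\Sigma_0$ clopen sets, $\Sigma_\alpha$ ($\alpha>0$) sets $\mathbf A(\mathbf P)$ with each $P_s\in\Pi_\beta$, $\beta<\alpha$; $\Pi_\alpha$ complements; Suslin sets are the members of $\bigcup_{\alpha<\omega_1}\Sigma_\alpha$. A code is a function $f\in\mathbb N^{\mathbb N}$ coding a well-founded labelled tree (leaves code clopen sets, inner nodes denote complement or application of $\mathbf A$ to the scheme of sets coded by children indexed by $\mathrm{SEQ}$); $P[f]$ is the coded set. $X$ is a product of copies of $\mathbb N^{\mathbb N}$, $\{0,1\}^{\mathbb N}$, $\mathbb N$. *)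

theory Defs
  imports Main "HOL-Library.Nat_Bijection"
begin

definition seqcode :: "(nat \<Rightarrow> nat) \<Rightarrow> nat \<Rightarrow> nat" where
  "seqcode f n = list_encode (map f [0..<n])"

definition suslin_S :: "(nat \<Rightarrow> nat) \<Rightarrow> nat" where
  "suslin_S g = (if \<exists>f. \<forall>n. g (seqcode f n) > 0 then 1 else 0)"

text \<open>An index e is decoded as the list
  list_decode e = [scheme number, parameters...].  kleene e ns fs Fs v means
  that the computation of index e on these arguments terminates with value v.\<close>

definition swap0 :: "'a list \<Rightarrow> nat \<Rightarrow> 'a list" where
  "swap0 l i = l[0 := l ! i, i := l ! 0]"

inductive kleene :: "nat \<Rightarrow> nat list \<Rightarrow> (nat \<Rightarrow> nat) list
    \<Rightarrow> ((nat \<Rightarrow> nat) \<Rightarrow> nat) list \<Rightarrow> nat \<Rightarrow> bool" where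
  S1: "list_decode e = [1] \<Longrightarrow> kleene e (n # ns) fs Fs (Suc n)"
| S2: "list_decode e = [2, q] \<Longrightarrow> kleene e ns fs Fs q"
| S3: "list_decode e = [3] \<Longrightarrow> kleene e (n # ns) fs Fs n"
| S4: "list_decode e = [4, e1, e2] \<Longrightarrow> kleene e2 ns fs Fs m \<Longrightarrow>
       kleene e1 (m # ns) fs Fs v \<Longrightarrow> kleene e ns fs Fs v"
| S5_0: "list_decode e = [5, e1, e2] \<Longrightarrow> kleene e1 ns fs Fs v \<Longrightarrow>
       kleene e (0 # ns) fs Fs v"
| S5_Suc: "list_decode e = [5, e1, e2] \<Longrightarrow> kleene e (n # ns) fs Fs m \<Longrightarrow>
       kleene e2 (m # n # ns) fs Fs v \<Longrightarrow> kleene e (Suc n # ns) fs Fs v"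
| S6_0: "list_decode e = [6, 0, i, e1] \<Longrightarrow> i < length ns \<Longrightarrow>
       kleene e1 (swap0 ns i) fs Fs v \<Longrightarrow> kleene e ns fs Fs v"
| S6_1: "list_decode e = [6, 1, i, e1] \<Longrightarrow> i < length fs \<Longrightarrow>
       kleene e1 ns (swap0 fs i) Fs v \<Longrightarrow> kleene e ns fs Fs v"
| S6_2: "list_decode e = [6, 2, i, e1] \<Longrightarrow> i < length Fs \<Longrightarrow>
       kleene e1 ns fs (swap0 Fs i) v \<Longrightarrow> kleene e ns fs Fs v"
| S7: "list_decode e = [7] \<Longrightarrow> kleene e (n # ns) (f # fs) Fs (f n)"
| S8: "list_decode e = [8, e1] \<Longrightarrow> (\<forall>m. kleene e1 (m # ns) fs (F # Fs) (g m)) \<Longrightarrow>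
       kleene e ns fs (F # Fs) (F g)"
| S9: "list_decode e = [9] \<Longrightarrow> kleene a ns fs Fs v \<Longrightarrow> kleene e (a # ns) fs Fs v"

text \<open>X = (product of the function-coordinates) x N^k; the function coordinates
  are listed by cs, where cs!i = True means the coordinate ranges over {0,1}^N
  and False means it ranges over N^N.\<close>

type_synonym point = "nat list \<times> (nat \<Rightarrow> nat) list"

definition X_space :: "nat \<Rightarrow> bool list \<Rightarrow> point set" where
  "X_space k cs = {(ns, fs). length ns = k \<and> length fs = length cs \<and>
     (\<forall>i<length cs. cs ! i \<longrightarrow> (\<forall>n. (fs ! i) n \<le> 1))}"

text \<open>Basic neighbourhoods: b codes the values of the N-coordinates and an
  initial segment of every function coordinate.\<close>
definition nbhd :: "nat \<Rightarrow> point set" where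
  "nbhd b = {(ns, fs). ns = list_decode (fst (prod_decode b)) \<and>
     length (list_decode (snd (prod_decode b))) = length fs \<and>
     (\<forall>i<length fs. \<forall>j<length (list_decode (list_decode (snd (prod_decode b)) ! i)).
        (fs ! i) j = list_decode (list_decode (snd (prod_decode b)) ! i) ! j)}"

text \<open>Node sigma of the tree coded by f carries the label f(list_encode sigma):
  0 = leaf (clopen set), 1 = complement, 2 = Suslin operation A.
  A complement node has the single child sigma@[0]; an A-node has the children
  sigma@[list_encode s] for s in SEQ, forming the Suslin scheme.\<close>

definition lab :: "(nat \<Rightarrow> nat) \<Rightarrow> nat list \<Rightarrow> nat" where
  "lab f \<sigma> = f (list_encode \<sigma>)"

inductive node :: "(nat \<Rightarrow> nat) \<Rightarrow> nat list \<Rightarrow> bool" for f where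
  root: "node f []"
| compl: "node f \<sigma> \<Longrightarrow> lab f \<sigma> = 1 \<Longrightarrow> node f (\<sigma> @ [0])"
| susl: "node f \<sigma> \<Longrightarrow> lab f \<sigma> = 2 \<Longrightarrow> node f (\<sigma> @ [n])"

text \<open>Leaf data: a leaf sigma codes a clopen set by the sequence
  n |-> f(list_encode (sigma@[n])), whose n-th entry codes a bit and a basic
  neighbourhood; these neighbourhoods must cover X with consistent bits, and the
  coded clopen set is the union of the neighbourhoods with bit 1.\<close>

definition leaf_bit :: "(nat \<Rightarrow> nat) \<Rightarrow> nat list \<Rightarrow> nat \<Rightarrow> nat" where
  "leaf_bit f \<sigma> n = fst (prod_decode (f (list_encode (\<sigma> @ [n]))))"

definition leaf_nbhd :: "(nat \<Rightarrow> nat) \<Rightarrow> nat list \<Rightarrow> nat \<Rightarrow> point set" where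
  "leaf_nbhd f \<sigma> n = nbhd (snd (prod_decode (f (list_encode (\<sigma> @ [n])))))"

definition valid_clopen :: "nat \<Rightarrow> bool list \<Rightarrow> (nat \<Rightarrow> nat) \<Rightarrow> nat list \<Rightarrow> bool" where
  "valid_clopen k cs f \<sigma> \<longleftrightarrow>
     (\<forall>x\<in>X_space k cs. \<exists>n. x \<in> leaf_nbhd f \<sigma> n) \<and>
     (\<forall>x\<in>X_space k cs. \<forall>n m. x \<in> leaf_nbhd f \<sigma> n \<and> x \<in> leaf_nbhd f \<sigma> m
         \<longrightarrow> leaf_bit f \<sigma> n = leaf_bit f \<sigma> m)"

definition clopen_of :: "nat \<Rightarrow> bool list \<Rightarrow> (nat \<Rightarrow> nat) \<Rightarrow> nat list \<Rightarrow> point set" where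
  "clopen_of k cs f \<sigma> = {x \<in> X_space k cs. \<exists>n. x \<in> leaf_nbhd f \<sigma> n \<and> leaf_bit f \<sigma> n = 1}"

definition is_code :: "nat \<Rightarrow> bool list \<Rightarrow> (nat \<Rightarrow> nat) \<Rightarrow> bool" where
  "is_code k cs f \<longleftrightarrow>
     (\<forall>\<sigma>. node f \<sigma> \<longrightarrow> lab f \<sigma> \<le> 2) \<and>
     (\<forall>\<sigma>. node f \<sigma> \<and> lab f \<sigma> = 0 \<longrightarrow> valid_clopen k cs f \<sigma>) \<and>
     \<not> (\<exists>g. \<forall>n. node f (map g [0..<n]))"

definition suslin_op :: "(nat list \<Rightarrow> 'a set) \<Rightarrow> 'a set" where
  "suslin_op P = (\<Union>g. \<Inter>n. P (map g [0..<n]))"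

inductive denotes :: "nat \<Rightarrow> bool list \<Rightarrow> (nat \<Rightarrow> nat) \<Rightarrow> nat list \<Rightarrow> point set \<Rightarrow> bool"
  for k cs f where
  leaf: "lab f \<sigma> = 0 \<Longrightarrow> denotes k cs f \<sigma> (clopen_of k cs f \<sigma>)"
| compl: "lab f \<sigma> = 1 \<Longrightarrow> denotes k cs f (\<sigma> @ [0]) S \<Longrightarrow>
          denotes k cs f \<sigma> (X_space k cs - S)"
| susl: "lab f \<sigma> = 2 \<Longrightarrow> (\<forall>s. denotes k cs f (\<sigma> @ [list_encode s]) (P s)) \<Longrightarrow>
          denotes k cs f \<sigma> (suslin_op P)"

definition coded_set :: "nat \<Rightarrow> bool list \<Rightarrow> (nat \<Rightarrow> nat) \<Rightarrow> point set" where
  "coded_set k cs f = (THE S. denotes k cs f [] S)"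

end

theory Submission
  imports Defs
begin


definition "Kc q = list_encode [2,q]"
definition "Hd = list_encode [3]"
definition "Sc = list_encode [1]"
definition "Pj i = list_encode [6,0,i,Hd]"
definition "LetP e2 e1 = list_encode [4,e1,e2]"
definition "Run = list_encode [9]"
definition "Ap j = list_encode [6,1,j,list_encode [7]]"
definition "Shift e = list_encode [5,e,Hd]"
definition "SelP A B = list_encode [5, Kc A, Kc B]"
definition "IfZ t A B = LetP (LetP t (SelP A B)) Run"
definition "PredP = list_encode [5, Kc 0, Pj 1]"
definition "SP e1 = list_encode [8,e1]"

lemma K_ok[intro]: "kleene (Kc q) ns fs Fs q"
  unfolding Kc_def by (rule kleene.S2) simp

lemma Hd_ok[intro]: "kleene Hd (n#ns) fs Fs n"
  unfolding Hd_def by (rule kleene.S3) simp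

lemma Sc_ok[intro]: "kleene Sc (n#ns) fs Fs (Suc n)"
  unfolding Sc_def by (rule kleene.S1) simp

lemma swap0_hd: "i < length l \<Longrightarrow> \<exists>r. swap0 l i = l!i # r"
  unfolding swap0_def by (cases l; cases i) auto

lemma Pj_ok: "i < length ns \<Longrightarrow> v = ns ! i \<Longrightarrow> kleene (Pj i) ns fs Fs v"
proof -
  assume a: "i < length ns" "v = ns ! i"
  then obtain r where r: "swap0 ns i = ns!i # r" using swap0_hd by blast
  have h: "kleene Hd (swap0 ns i) fs Fs v" using r a Hd_ok by simp
  have d: "list_decode (Pj i) = [6, 0, i, Hd]" unfolding Pj_def by simp
  show ?thesis by (rule kleene.S6_0[OF d a(1) h])
qed

lemma Let_ok: "kleene e2 ns fs Fs m \<Longrightarrow> kleene e1 (m#ns) fs Fs v \<Longrightarrow> kleene (LetP e2 e1) ns fs Fs v"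
  by (rule kleene.S4[OF _ ]) (auto simp: LetP_def)

lemma Run_ok: "kleene a ns fs Fs v \<Longrightarrow> kleene Run (a#ns) fs Fs v"
  unfolding Run_def by (rule kleene.S9) simp_all

lemma Ap_ok: "j < length fs \<Longrightarrow> v = (fs!j) n \<Longrightarrow> kleene (Ap j) (n#ns) fs Fs v"
proof -
  assume a: "j < length fs" "v = (fs!j) n"
  then obtain r where r: "swap0 fs j = fs!j # r" using swap0_hd by blast
  have h: "kleene (list_encode [7]) (n#ns) (swap0 fs j) Fs v" unfolding r a
    by (rule kleene.S7) simp
  have d: "list_decode (Ap j) = [6, 1, j, list_encode [7]]" unfolding Ap_def by simp
  show ?thesis by (rule kleene.S6_1[OF d a(1) h])
qed

lemma Shift_ok: assumes h: "kleene e ns fs Fs v" shows "kleene (Shift e) (a#ns) fs Fs v"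
proof (induction a)
  case 0
  have d: "list_decode (Shift e) = [5, e, Hd]" by (simp add: Shift_def)
  show ?case by (rule kleene.S5_0[OF d h])
next
  case (Suc a)
  have d: "list_decode (Shift e) = [5, e, Hd]" by (simp add: Shift_def)
  show ?case by (rule kleene.S5_Suc[OF d Suc Hd_ok])
qed

lemma Sel_ok: "kleene (SelP A B) (c#ns) fs Fs (if c = 0 then A else B)"
proof (induction c)
  case 0
  have d: "list_decode (SelP A B) = [5, Kc A, Kc B]" by (simp add: SelP_def)
  show ?case using kleene.S5_0[OF d K_ok] by simp
next
  case (Suc c)
  have d: "list_decode (SelP A B) = [5, Kc A, Kc B]" by (simp add: SelP_def)
  show ?case using kleene.S5_Suc[OF d Suc K_ok] by simp
qed

lemma IfZ_ok: "kleene t ns fs Fs c \<Longrightarrow> (c = 0 \<Longrightarrow> kleene A ns fs Fs v) \<Longrightarrow> (c \<noteq> 0 \<Longrightarrow> kleene B ns fs Fs v)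
  \<Longrightarrow> kleene (IfZ t A B) ns fs Fs v"
  unfolding IfZ_def
  apply (rule Let_ok[where m="if c = 0 then A else B"])
   apply (rule Let_ok[where m=c], assumption, rule Sel_ok)
  apply (rule Run_ok) by auto

lemma Pred_ok[intro]: "kleene PredP (n#ns) fs Fs (n - 1)"
proof (induction n)
  case 0
  have d: "list_decode PredP = [5, Kc 0, Pj 1]" by (simp add: PredP_def)
  show ?case using kleene.S5_0[OF d K_ok] by simp
next
  case (Suc n)
  have d: "list_decode PredP = [5, Kc 0, Pj 1]" by (simp add: PredP_def)
  show ?case by (rule kleene.S5_Suc[OF d Suc Pj_ok]) auto
qed

lemma SP_ok: "(\<And>m. kleene e1 (m#ns) fs (F#Fs) (g m)) \<Longrightarrow> kleene (SP e1) ns fs (F#Fs) (F g)"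
proof -
  assume h: "\<And>m. kleene e1 (m#ns) fs (F#Fs) (g m)"
  have d: "list_decode (SP e1) = [8, e1]" by (simp add: SP_def)
  show ?thesis by (rule kleene.S8[OF d]) (use h in blast)
qed

fun ShiftN :: "nat \<Rightarrow> nat \<Rightarrow> nat" where
  "ShiftN 0 t = t" | "ShiftN (Suc n) t = Shift (ShiftN n t)"

lemma ShiftN_ok: "kleene t ns fs Fs v \<Longrightarrow> length pre = n \<Longrightarrow> kleene (ShiftN n t) (pre @ ns) fs Fs v"
proof (induction n arbitrary: pre)
  case 0 then show ?case by simp
next
  case (Suc n)
  then obtain a pre' where "pre = a # pre'" "length pre' = n" by (cases pre) auto
  with Suc show ?case by (auto intro: Shift_ok)
qed

fun Call :: "nat list \<Rightarrow> nat \<Rightarrow> nat" where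
  "Call [] g = g" | "Call (t # ts) g = Call ts (LetP (ShiftN (length ts) t) g)"

lemma Call_ok: "list_all2 (\<lambda>t v. kleene t ns fs Fs v) ts vs \<Longrightarrow> kleene g (vs @ ns) fs Fs w
  \<Longrightarrow> kleene (Call ts g) ns fs Fs w"
proof (induction ts arbitrary: g vs)
  case Nil then show ?case by simp
next
  case (Cons t ts)
  then obtain v vs' where vs: "vs = v # vs'" "kleene t ns fs Fs v" "list_all2 (\<lambda>t v. kleene t ns fs Fs v) ts vs'"
    by (cases vs) auto
  have "kleene (LetP (ShiftN (length ts) t) g) (vs' @ ns) fs Fs w"
    apply (rule Let_ok[where m=v])
     apply (rule ShiftN_ok[OF vs(2)]) using vs(3) list_all2_lengthD apply metis
    using Cons.prems(2) vs(1) by simp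
  then show ?case using Cons.IH[OF vs(3)] by simp
qed



definition "Op1 g t = LetP t g"
definition "Op2 g t u = Call [t,u] g"

lemma Op1_ok: "kleene t ns fs Fs a \<Longrightarrow> kleene g (a#ns) fs Fs v \<Longrightarrow> kleene (Op1 g t) ns fs Fs v"
  unfolding Op1_def by (rule Let_ok)

lemma Op2_ok: "kleene t ns fs Fs a \<Longrightarrow> kleene u ns fs Fs b \<Longrightarrow> kleene g (a#b#ns) fs Fs v \<Longrightarrow> kleene (Op2 g t u) ns fs Fs v"
  unfolding Op2_def by (rule Call_ok[where vs="[a,b]"]) auto

lemma Call3_ok: "kleene t1 ns fs Fs a1 \<Longrightarrow> kleene t2 ns fs Fs a2 \<Longrightarrow> kleene t3 ns fs Fs a3 \<Longrightarrow>
  kleene g (a1#a2#a3#ns) fs Fs v \<Longrightarrow> kleene (Call [t1,t2,t3] g) ns fs Fs v"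
  by (rule Call_ok[where vs="[a1,a2,a3]"]) auto

lemma Call4_ok: "kleene t1 ns fs Fs a1 \<Longrightarrow> kleene t2 ns fs Fs a2 \<Longrightarrow> kleene t3 ns fs Fs a3 \<Longrightarrow>
  kleene t4 ns fs Fs a4 \<Longrightarrow>
  kleene g (a1#a2#a3#a4#ns) fs Fs v \<Longrightarrow> kleene (Call [t1,t2,t3,t4] g) ns fs Fs v"
  by (rule Call_ok[where vs="[a1,a2,a3,a4]"]) auto

lemma Pj0[intro]: "kleene (Pj 0) (a#ns) fs Fs a" by (rule Pj_ok) auto
lemma Pj1[intro]: "kleene (Pj 1) (a#b#ns) fs Fs b" by (rule Pj_ok) auto
lemma Pj2[intro]: "kleene (Pj 2) (a#b#c#ns) fs Fs c" by (rule Pj_ok) auto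
lemma Pj3[intro]: "kleene (Pj 3) (a#b#c#d#ns) fs Fs d" by (rule Pj_ok) auto

definition "SubR = list_encode [5, Pj 0, LetP (Pj 0) PredP]"
definition "SubP = Call [Pj 1, Pj 0] SubR"

lemma SubR_ok: "kleene SubR (b#a#ns) fs Fs (a - b)"
proof (induction b)
  case 0
  have d: "list_decode SubR = [5, Pj 0, LetP (Pj 0) PredP]" by (simp add: SubR_def)
  show ?case using kleene.S5_0[OF d Pj0] by simp
next
  case (Suc b)
  have d: "list_decode SubR = [5, Pj 0, LetP (Pj 0) PredP]" by (simp add: SubR_def)
  have "kleene (LetP (Pj 0) PredP) ((a - b) # b # a # ns) fs Fs (a - b - 1)"
    by (rule Let_ok[OF Pj0 Pred_ok])
  then have "kleene SubR (Suc b # a # ns) fs Fs (a - b - 1)" by (rule kleene.S5_Suc[OF d Suc])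
  moreover have "a - b - 1 = a - Suc b" by simp
  ultimately show ?case by metis
qed

lemma SubP_ok[intro]: "kleene SubP (a#b#ns) fs Fs (a - b)"
  unfolding SubP_def
  unfolding Op2_def[symmetric] by (rule Op2_ok[OF Pj1 Pj0 SubR_ok])

definition "AddR = list_encode [5, Pj 0, LetP (Pj 0) Sc]"
definition "AddP = Call [Pj 1, Pj 0] AddR"

lemma AddR_ok: "kleene AddR (b#a#ns) fs Fs (a + b)"
proof (induction b)
  case 0
  have d: "list_decode AddR = [5, Pj 0, LetP (Pj 0) Sc]" by (simp add: AddR_def)
  show ?case using kleene.S5_0[OF d Pj0] by simp
next
  case (Suc b)
  have d: "list_decode AddR = [5, Pj 0, LetP (Pj 0) Sc]" by (simp add: AddR_def)
  have "kleene (LetP (Pj 0) Sc) ((a + b) # b # a # ns) fs Fs (Suc (a + b))"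
    by (rule Let_ok[OF Pj0 Sc_ok])
  then have "kleene AddR (Suc b # a # ns) fs Fs (Suc (a + b))" by (rule kleene.S5_Suc[OF d Suc])
  then show ?case by simp
qed

lemma AddP_ok[intro]: "kleene AddP (a#b#ns) fs Fs (a + b)"
  unfolding AddP_def
  unfolding Op2_def[symmetric] by (rule Op2_ok[OF Pj1 Pj0 AddR_ok])

definition "TriP = list_encode [5, Kc 0, Op2 AddP (Pj 0) (LetP (Pj 1) Sc)]"

lemma TriP_ok[intro]: "kleene TriP (n#ns) fs Fs (triangle n)"
proof (induction n)
  case 0
  have d: "list_decode TriP = [5, Kc 0, Op2 AddP (Pj 0) (LetP (Pj 1) Sc)]" by (simp add: TriP_def)
  show ?case using kleene.S5_0[OF d K_ok] by simp
next
  case (Suc n)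
  have d: "list_decode TriP = [5, Kc 0, Op2 AddP (Pj 0) (LetP (Pj 1) Sc)]" by (simp add: TriP_def)
  have "kleene (Op2 AddP (Pj 0) (LetP (Pj 1) Sc)) (triangle n # n # ns) fs Fs (triangle n + Suc n)"
    by (rule Op2_ok[OF Pj0 Let_ok[OF Pj1 Sc_ok] AddP_ok])
  then have "kleene TriP (Suc n # ns) fs Fs (triangle n + Suc n)" by (rule kleene.S5_Suc[OF d Suc])
  then show ?case by simp
qed

definition "PEP = Op2 AddP (Op1 TriP (Op2 AddP (Pj 0) (Pj 1))) (Pj 0)"

lemma PEP_ok[intro]: "kleene PEP (a#b#ns) fs Fs (prod_encode (a,b))"
proof -
  have "kleene PEP (a#b#ns) fs Fs (triangle (a + b) + a)"
    unfolding PEP_def by (rule Op2_ok[OF Op1_ok[OF Op2_ok[OF Pj0 Pj1 AddP_ok] TriP_ok] Pj0 AddP_ok])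
  then show ?thesis by (simp add: prod_encode_def)
qed

definition "EqT t u = IfZ (Op2 SubP t u) (IfZ (Op2 SubP u t) (Kc 0) (Kc 1)) (Kc 1)"

lemma EqT_ok: assumes t: "kleene t ns fs Fs a" and u: "kleene u ns fs Fs b"
  shows "kleene (EqT t u) ns fs Fs (if a = b then 0 else 1)"
  unfolding EqT_def
proof (rule IfZ_ok[OF Op2_ok[OF t u SubP_ok]])
  assume "a - b = 0"
  show "kleene (IfZ (Op2 SubP u t) (Kc 0) (Kc 1)) ns fs Fs (if a = b then 0 else 1)"
  proof (rule IfZ_ok[OF Op2_ok[OF u t SubP_ok]])
    assume "b - a = 0" then have "a = b" using \<open>a - b = 0\<close> by simp
    then show "kleene (Kc 0) ns fs Fs (if a = b then 0 else 1)" using K_ok by simp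
  next
    assume "b - a \<noteq> 0" then have "a \<noteq> b" by simp
    then show "kleene (Kc 1) ns fs Fs (if a = b then 0 else 1)" using K_ok by simp
  qed
next
  assume "a - b \<noteq> 0" then have "a \<noteq> b" by simp
  then show "kleene (Kc 1) ns fs Fs (if a = b then 0 else 1)" using K_ok by simp
qed



definition "PDB out = IfZ (Op2 SubP (Pj 2) (Pj 1)) out
   (Call [Pj 0, Pj 0, Op1 Sc (Pj 1), Op2 SubP (Pj 2) (Op1 Sc (Pj 1))] Run)"

lemma kl_subst: "kleene e ns fs Fs v \<Longrightarrow> e = e' \<Longrightarrow> kleene e' ns fs Fs v" by simp

lemma PDB_ok:
  assumes out: "\<And>y k m ns. m \<le> k \<Longrightarrow> kleene out (y#k#m#ns) fs Fs (sel (m, k - m))"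
  shows "kleene (PDB out) (PDB out # k # m # ns) fs Fs (sel (prod_decode_aux k m))"
proof (induction k m arbitrary: ns rule: prod_decode_aux.induct)
  case (1 k m)
  show ?case
  proof (rule kl_subst[OF _ PDB_def[symmetric]], rule IfZ_ok[OF Op2_ok[OF Pj2 Pj1 SubP_ok]])
    assume "m - k = 0"
    then have "m \<le> k" by simp
    then show "kleene out (PDB out # k # m # ns) fs Fs (sel (prod_decode_aux k m))"
      using out[of m k] by (simp add: prod_decode_aux.simps)
  next
    assume h: "m - k \<noteq> 0"
    have sc: "kleene (Op1 Sc (Pj 1)) (PDB out # k # m # ns) fs Fs (Suc k)"
      by (rule Op1_ok[OF Pj1 Sc_ok])
    have "kleene (PDB out) (PDB out # Suc k # (m - Suc k) # PDB out # k # m # ns) fs Fs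
        (sel (prod_decode_aux (Suc k) (m - Suc k)))"
      using 1 h by simp
    then have "kleene Run (PDB out # PDB out # Suc k # (m - Suc k) # PDB out # k # m # ns) fs Fs
        (sel (prod_decode_aux (Suc k) (m - Suc k)))" by (rule Run_ok)
    then have "kleene (Call [Pj 0, Pj 0, Op1 Sc (Pj 1), Op2 SubP (Pj 2) (Op1 Sc (Pj 1))] Run)
      (PDB out # k # m # ns) fs Fs (sel (prod_decode_aux (Suc k) (m - Suc k)))"
      by (rule Call4_ok[OF Pj0 Pj0 sc Op2_ok[OF Pj2 sc SubP_ok]])
    moreover have "prod_decode_aux k m = prod_decode_aux (Suc k) (m - Suc k)"
      using h by (simp add: prod_decode_aux.simps)
    ultimately show "kleene (Call [Pj 0, Pj 0, Op1 Sc (Pj 1), Op2 SubP (Pj 2) (Op1 Sc (Pj 1))] Run)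
      (PDB out # k # m # ns) fs Fs (sel (prod_decode_aux k m))" by simp
  qed
qed

definition "BF = PDB (Pj 2)"
definition "BS = PDB (Op2 SubP (Pj 1) (Pj 2))"
definition "PDF = Call [Kc BF, Kc 0, Pj 0] BF"
definition "PDS = Call [Kc BS, Kc 0, Pj 0] BS"

lemma BF_ok: "kleene BF (BF # k # m # ns) fs Fs (fst (prod_decode_aux k m))"
  unfolding BF_def by (rule PDB_ok) auto

lemma BS_ok: "kleene BS (BS # k # m # ns) fs Fs (snd (prod_decode_aux k m))"
  unfolding BS_def by (rule PDB_ok) (simp only: snd_conv, rule Op2_ok[OF Pj1 Pj2 SubP_ok])

lemma PDF_ok[intro]: "kleene PDF (n # ns) fs Fs (fst (prod_decode n))"
  unfolding PDF_def prod_decode_def by (rule Call3_ok[OF K_ok K_ok Pj0 BF_ok])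

lemma PDS_ok[intro]: "kleene PDS (n # ns) fs Fs (snd (prod_decode n))"
  unfolding PDS_def prod_decode_def by (rule Call3_ok[OF K_ok K_ok Pj0 BS_ok])

definition "hdc c = fst (prod_decode (c - 1))"
definition "tlc c = snd (prod_decode (c - 1))"

definition "HDC = LetP PredP PDF"
definition "TLC = LetP PredP PDS"

lemma HDC_ok[intro]: "kleene HDC (c # ns) fs Fs (hdc c)"
  unfolding HDC_def hdc_def by (rule Let_ok[OF Pred_ok PDF_ok])

lemma TLC_ok[intro]: "kleene TLC (c # ns) fs Fs (tlc c)"
  unfolding TLC_def tlc_def by (rule Let_ok[OF Pred_ok PDS_ok])

lemma hdc_cons[simp]: "hdc (list_encode (x # xs)) = x"
  by (simp add: hdc_def)

lemma tlc_cons[simp]: "tlc (list_encode (x # xs)) = list_encode xs"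
  by (simp add: tlc_def)

lemma tlc_enc: "tlc (list_encode xs) = list_encode (tl xs)"
  proof (cases xs)
  case Nil
  have "prod_decode 0 = (0, 0)" unfolding prod_decode_def by (simp add: prod_decode_aux.simps[of 0 0])
  then show ?thesis using Nil by (simp add: tlc_def)
qed (simp add: tlc_def)

lemma tli_enc: "(tlc ^^ i) (list_encode xs) = list_encode (drop i xs)"
  by (induction i) (auto simp: tlc_enc drop_Suc tl_drop)

definition "TLI = list_encode [5, Pj 0, LetP (Pj 0) TLC]"

lemma TLI_ok[intro]: "kleene TLI (i # c # ns) fs Fs ((tlc ^^ i) c)"
proof (induction i)
  case 0
  have d: "list_decode TLI = [5, Pj 0, LetP (Pj 0) TLC]" by (simp add: TLI_def)
  show ?case using kleene.S5_0[OF d Pj0] by simp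
next
  case (Suc i)
  have d: "list_decode TLI = [5, Pj 0, LetP (Pj 0) TLC]" by (simp add: TLI_def)
  have "kleene (LetP (Pj 0) TLC) ((tlc ^^ i) c # i # c # ns) fs Fs (tlc ((tlc ^^ i) c))"
    by (rule Let_ok[OF Pj0 TLC_ok])
  then have "kleene TLI (Suc i # c # ns) fs Fs (tlc ((tlc ^^ i) c))" by (rule kleene.S5_Suc[OF d Suc])
  then show ?case by simp
qed

definition "NTHC = Op1 HDC (Op2 TLI (Pj 1) (Pj 0))"

lemma NTHC_ok[intro]: "kleene NTHC (c # i # ns) fs Fs (hdc ((tlc ^^ i) c))"
  unfolding NTHC_def by (rule Op1_ok[OF Op2_ok[OF Pj1 Pj0 TLI_ok] HDC_ok])

lemma nth_enc: "i < length xs \<Longrightarrow> hdc ((tlc ^^ i) (list_encode xs)) = xs ! i"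
  by (metis Cons_nth_drop_Suc hdc_cons tli_enc)

definition "LENB = IfZ (Pj 1) (Kc 0) (Op1 Sc (Call [Pj 0, Pj 0, Op1 TLC (Pj 1)] Run))"
definition "LENC = Call [Kc LENB, Pj 0] LENB"

lemma LENB_ok: "kleene LENB (LENB # list_encode xs # ns) fs Fs (length xs)"
proof (induction xs arbitrary: ns)
  case Nil
  show ?case
    by (rule kl_subst[OF _ LENB_def[symmetric]], rule IfZ_ok[OF Pj1]) (auto simp: K_ok)
next
  case (Cons x xs)
  have tl: "kleene (Op1 TLC (Pj 1)) (LENB # list_encode (x # xs) # ns) fs Fs (list_encode xs)"
  proof -
    have "kleene (Op1 TLC (Pj 1)) (LENB # list_encode (x # xs) # ns) fs Fs (tlc (list_encode (x # xs)))"
      by (rule Op1_ok[OF Pj1 TLC_ok])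
    then show ?thesis by (simp only: tlc_cons)
  qed
  have "kleene Run (LENB # LENB # list_encode xs # LENB # list_encode (x # xs) # ns) fs Fs (length xs)"
    by (rule Run_ok[OF Cons])
  then have r: "kleene (Call [Pj 0, Pj 0, Op1 TLC (Pj 1)] Run) (LENB # list_encode (x # xs) # ns) fs Fs (length xs)"
    by (rule Call3_ok[OF Pj0 Pj0 tl])
  have s: "kleene (Op1 Sc (Call [Pj 0, Pj 0, Op1 TLC (Pj 1)] Run)) (LENB # list_encode (x # xs) # ns) fs Fs (Suc (length xs))"
    by (rule Op1_ok[OF r Sc_ok])
  show ?case
    apply (rule kl_subst[OF _ LENB_def[symmetric]], rule IfZ_ok[OF Pj1])
    using s by auto
qed

lemma LENC_ok[intro]: "kleene LENC (c # ns) fs Fs (length (list_decode c))"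
proof -
  have "kleene LENB (LENB # list_encode (list_decode c) # c # ns) fs Fs (length (list_decode c))"
    by (rule LENB_ok)
  then show ?thesis unfolding LENC_def Op2_def[symmetric] by (intro Op2_ok[OF K_ok Pj0]) simp
qed



definition "APPB = IfZ (Pj 1) (Op1 Sc (Op2 PEP (Pj 2) (Kc 0)))
  (Op1 Sc (Op2 PEP (Op1 HDC (Pj 1)) (Call [Pj 0, Pj 0, Op1 TLC (Pj 1), Pj 2] Run)))"
definition "APPC = Call [Kc APPB, Pj 0, Pj 1] APPB"

lemma APPB_ok: "kleene APPB (APPB # list_encode xs # m # ns) fs Fs (list_encode (xs @ [m]))"
proof (induction xs arbitrary: ns)
  case Nil
  have s: "kleene (Op1 Sc (Op2 PEP (Pj 2) (Kc 0))) (APPB # list_encode [] # m # ns) fs Fs (list_encode ([] @ [m]))"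
    using Op1_ok[OF Op2_ok[OF Pj2 K_ok PEP_ok] Sc_ok] by simp
  show ?case
    apply (rule kl_subst[OF _ APPB_def[symmetric]], rule IfZ_ok[OF Pj1])
    using s by auto
next
  case (Cons x xs)
  let ?E = "APPB # list_encode (x # xs) # m # ns"
  have tl: "kleene (Op1 TLC (Pj 1)) ?E fs Fs (list_encode xs)"
  proof -
    have "kleene (Op1 TLC (Pj 1)) ?E fs Fs (tlc (list_encode (x # xs)))"
      by (rule Op1_ok[OF Pj1 TLC_ok])
    then show ?thesis by (simp only: tlc_cons)
  qed
  have hd: "kleene (Op1 HDC (Pj 1)) ?E fs Fs x"
  proof -
    have "kleene (Op1 HDC (Pj 1)) ?E fs Fs (hdc (list_encode (x # xs)))"
      by (rule Op1_ok[OF Pj1 HDC_ok])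
    then show ?thesis by (simp only: hdc_cons)
  qed
  have "kleene Run (APPB # APPB # list_encode xs # m # ?E) fs Fs (list_encode (xs @ [m]))"
    by (rule Run_ok[OF Cons])
  then have r: "kleene (Call [Pj 0, Pj 0, Op1 TLC (Pj 1), Pj 2] Run) ?E fs Fs (list_encode (xs @ [m]))"
    by (rule Call4_ok[OF Pj0 Pj0 tl Pj2])
  have s: "kleene (Op1 Sc (Op2 PEP (Op1 HDC (Pj 1)) (Call [Pj 0, Pj 0, Op1 TLC (Pj 1), Pj 2] Run))) ?E fs Fs
     (list_encode ((x # xs) @ [m]))"
    using Op1_ok[OF Op2_ok[OF hd r PEP_ok] Sc_ok] by simp
  show ?case
    apply (rule kl_subst[OF _ APPB_def[symmetric]], rule IfZ_ok[OF Pj1])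
    using s by auto
qed

lemma APPC_ok[intro]: "kleene APPC (c # m # ns) fs Fs (list_encode (list_decode c @ [m]))"
proof -
  have "kleene APPB (APPB # list_encode (list_decode c) # m # c # m # ns) fs Fs (list_encode (list_decode c @ [m]))"
    by (rule APPB_ok)
  then show ?thesis unfolding APPC_def by (intro Call3_ok[OF K_ok Pj0 Pj1]) simp
qed

definition "AndT t u = IfZ t u (Kc 1)"

lemma AndT_ok: "kleene t E fs Fs a \<Longrightarrow> kleene u E fs Fs b \<Longrightarrow> b \<le> 1 \<Longrightarrow>
   kleene (AndT t u) E fs Fs (if a = 0 \<and> b = 0 then 0 else 1)"
  unfolding AndT_def
proof (rule IfZ_ok, assumption)
  assume "kleene u E fs Fs b" "b \<le> 1"
  moreover have "b = 0 \<or> b = 1" using \<open>b \<le> 1\<close> by auto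
  ultimately show "kleene u E fs Fs (if a = 0 \<and> b = 0 then 0 else 1)" if "a = 0" using that by auto
next
  show "kleene (Kc 1) E fs Fs (if a = 0 \<and> b = 0 then 0 else 1)" if "a \<noteq> 0" using that K_ok by auto
qed

definition "AllM T ix = foldr (\<lambda>i acc. AndT (T i) acc) ix (Kc 0)"

lemma AllM_ok: "(\<And>i. i \<in> set ix \<Longrightarrow> kleene (T i) E fs Fs (v i) \<and> v i \<le> 1) \<Longrightarrow>
   kleene (AllM T ix) E fs Fs (if \<forall>i\<in>set ix. v i = 0 then 0 else 1)"
proof (induction ix)
  case Nil then show ?case by (simp add: AllM_def K_ok)
next
  case (Cons i ix)
  have "kleene (AndT (T i) (AllM T ix)) E fs Fs
      (if v i = 0 \<and> (if \<forall>i\<in>set ix. v i = 0 then 0 else 1::nat) = 0 then 0 else 1)"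
    by (rule AndT_ok) (use Cons in auto)
  moreover have "(if v i = 0 \<and> (if \<forall>i\<in>set ix. v i = 0 then 0 else 1::nat) = 0 then 0 else 1)
     = (if \<forall>i'\<in>set (i # ix). v i' = 0 then 0 else (1::nat))" by auto
  moreover have "AllM T (i # ix) = AndT (T i) (AllM T ix)" by (simp add: AllM_def)
  ultimately show ?case by simp
qed

definition "BAll test = list_encode [5, Kc 0, IfZ (Pj 0) (Shift test) (Kc 1)]"

lemma BAll_ok: assumes t: "\<And>j. kleene test (j # E) fs Fs (tv j) \<and> tv j \<le> 1"
  shows "kleene (BAll test) (L # E) fs Fs (if \<forall>j<L. tv j = 0 then 0 else 1)"
proof (induction L)
  case 0
  have d: "list_decode (BAll test) = [5, Kc 0, IfZ (Pj 0) (Shift test) (Kc 1)]" by (simp add: BAll_def)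
  show ?case using kleene.S5_0[OF d K_ok] by simp
next
  case (Suc L)
  have d: "list_decode (BAll test) = [5, Kc 0, IfZ (Pj 0) (Shift test) (Kc 1)]" by (simp add: BAll_def)
  let ?w = "if \<forall>j<L. tv j = 0 then 0 else 1::nat"
  have "kleene (IfZ (Pj 0) (Shift test) (Kc 1)) (?w # L # E) fs Fs (if \<forall>j<Suc L. tv j = 0 then 0 else 1)"
  proof (rule IfZ_ok[OF Pj0])
    assume "?w = 0"
    then have a: "\<forall>j<L. tv j = 0" by (simp split: if_splits)
    have "kleene (Shift test) (?w # L # E) fs Fs (tv L)" by (rule Shift_ok) (use t in blast)
    moreover have "tv L = (if \<forall>j<Suc L. tv j = 0 then 0 else 1)"
      using a t[of L] by (auto simp: less_Suc_eq)
    ultimately show "kleene (Shift test) (?w # L # E) fs Fs (if \<forall>j<Suc L. tv j = 0 then 0 else 1)" by simp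
  next
    assume "?w \<noteq> 0"
    then show "kleene (Kc 1) (?w # L # E) fs Fs (if \<forall>j<Suc L. tv j = 0 then 0 else 1)"
      using K_ok by (auto split: if_splits)
  qed
  then show ?case by (rule kleene.S5_Suc[OF d Suc])
qed



definition "TA = Op1 PDF (Pj 0)"
definition "TB = Op1 PDS (Pj 0)"
definition "T1 k = EqT (Op1 LENC TA) (Kc k)"
definition "T2 i = EqT (Op2 NTHC TA (Kc i)) (Pj (Suc i))"
definition "T3 mm = EqT (Op1 LENC TB) (Kc mm)"
definition "TESTJ i = EqT (Op1 (Ap (Suc i)) (Pj 0)) (Op2 NTHC (Op2 NTHC (Op1 PDS (Pj 1)) (Kc i)) (Pj 0))"
definition "T4 i = LetP (Op1 LENC (Op2 NTHC TB (Kc i))) (BAll (TESTJ i))"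
definition "NB k mm = AndT (T1 k) (AndT (AllM T2 [0..<k]) (AndT (T3 mm) (AllM T4 [0..<mm])))"

lemma nth_dec: "i < length (list_decode c) \<Longrightarrow> hdc ((tlc ^^ i) c) = list_decode c ! i"
  using nth_enc[of i "list_decode c"] by simp

lemma NB_ok:
  assumes lx: "length xs = k" and lp: "length pts = mm"
  shows "kleene (NB k mm) (b # xs @ tail) (f # pts) Fs (if (xs, pts) \<in> nbhd b then 0 else 1)"
proof -
  let ?E = "b # xs @ tail"
  let ?fs = "f # pts"
  define A where "A = fst (prod_decode b)"
  define B where "B = snd (prod_decode b)"
  define D where "D i = hdc ((tlc ^^ i) B)" for i
  have tA: "kleene TA ?E ?fs Fs A" unfolding TA_def A_def by (rule Op1_ok[OF Pj0 PDF_ok])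
  have tB: "kleene TB ?E ?fs Fs B" unfolding TB_def B_def by (rule Op1_ok[OF Pj0 PDS_ok])
  define v1 where "v1 = (if length (list_decode A) = k then 0 else 1::nat)"
  have t1: "kleene (T1 k) ?E ?fs Fs v1" unfolding T1_def v1_def
    by (rule EqT_ok[OF Op1_ok[OF tA LENC_ok] K_ok])
  define v2 where "v2 i = (if hdc ((tlc ^^ i) A) = xs ! i then 0 else 1::nat)" for i
  have t2: "kleene (T2 i) ?E ?fs Fs (v2 i) \<and> v2 i \<le> 1" if "i \<in> set [0..<k]" for i
  proof -
    have "kleene (Pj (Suc i)) ?E ?fs Fs (xs ! i)" by (rule Pj_ok) (use that lx in \<open>auto simp: nth_append\<close>)
    then show ?thesis unfolding T2_def v2_def
      using EqT_ok[OF Op2_ok[OF tA K_ok NTHC_ok]] by auto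
  qed
  define v3 where "v3 = (if length (list_decode B) = mm then 0 else 1::nat)"
  have t3: "kleene (T3 mm) ?E ?fs Fs v3" unfolding T3_def v3_def
    by (rule EqT_ok[OF Op1_ok[OF tB LENC_ok] K_ok])
  define v4 where "v4 i = (if \<forall>j<length (list_decode (D i)). (pts ! i) j = hdc ((tlc ^^ j) (D i)) then 0 else 1::nat)" for i
  have t4: "kleene (T4 i) ?E ?fs Fs (v4 i) \<and> v4 i \<le> 1" if "i \<in> set [0..<mm]" for i
  proof -
    have im: "i < mm" using that by simp
    have tj: "kleene (TESTJ i) (j # ?E) ?fs Fs (if (pts ! i) j = hdc ((tlc ^^ j) (D i)) then 0 else 1)
        \<and> (if (pts ! i) j = hdc ((tlc ^^ j) (D i)) then 0 else 1::nat) \<le> 1" for j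
    proof -
      have a: "kleene (Op1 (Ap (Suc i)) (Pj 0)) (j # ?E) ?fs Fs ((pts ! i) j)"
        by (rule Op1_ok[OF Pj0 Ap_ok]) (use im lp in auto)
      have pb: "kleene (Op1 PDS (Pj 1)) (j # ?E) ?fs Fs B" unfolding B_def by (rule Op1_ok[OF Pj1 PDS_ok])
      have d: "kleene (Op2 NTHC (Op1 PDS (Pj 1)) (Kc i)) (j # ?E) ?fs Fs (D i)" unfolding D_def
        by (rule Op2_ok[OF pb K_ok NTHC_ok])
      show ?thesis unfolding TESTJ_def using EqT_ok[OF a Op2_ok[OF d Pj0 NTHC_ok]] by simp
    qed
    have dd: "kleene (Op1 LENC (Op2 NTHC TB (Kc i))) ?E ?fs Fs (length (list_decode (D i)))"
      unfolding D_def by (rule Op1_ok[OF Op2_ok[OF tB K_ok NTHC_ok] LENC_ok])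
    have "(if \<forall>j<length (list_decode (D i)). (if (pts ! i) j = hdc ((tlc ^^ j) (D i)) then 0 else 1::nat) = 0
       then 0 else 1) = v4 i" unfolding v4_def by (auto split: if_splits)
    then show ?thesis unfolding T4_def 
      using Let_ok[OF dd BAll_ok[OF tj]] by (simp add: v4_def del: if_split)
  qed
  have m2: "kleene (AllM T2 [0..<k]) ?E ?fs Fs (if (\<forall>i\<in>set [0..<k]. v2 i = 0) then 0 else 1::nat)"
    by (rule AllM_ok[where v=v2]) (rule t2)
  have m4: "kleene (AllM T4 [0..<mm]) ?E ?fs Fs (if (\<forall>i\<in>set [0..<mm]. v4 i = 0) then 0 else 1::nat)"
    by (rule AllM_ok[where v=v4]) (rule t4)
  have a3: "kleene (AndT (T3 mm) (AllM T4 [0..<mm])) ?E ?fs Fs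
     (if v3 = 0 \<and> (if (\<forall>i\<in>set [0..<mm]. v4 i = 0) then 0 else 1::nat) = 0 then 0 else 1)"
    by (rule AndT_ok[OF t3 m4]) simp
  have a2: "kleene (AndT (AllM T2 [0..<k]) (AndT (T3 mm) (AllM T4 [0..<mm]))) ?E ?fs Fs
     (if (if (\<forall>i\<in>set [0..<k]. v2 i = 0) then 0 else 1::nat) = 0 \<and>
       (if v3 = 0 \<and> (if (\<forall>i\<in>set [0..<mm]. v4 i = 0) then 0 else 1::nat) = 0 then 0 else 1::nat) = 0 then 0 else 1)"
    by (rule AndT_ok[OF m2 a3]) simp
  have a1: "kleene (NB k mm) ?E ?fs Fs
     (if v1 = 0 \<and> (if (if (\<forall>i\<in>set [0..<k]. v2 i = 0) then 0 else 1::nat) = 0 \<and>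
       (if v3 = 0 \<and> (if (\<forall>i\<in>set [0..<mm]. v4 i = 0) then 0 else 1::nat) = 0 then 0 else 1::nat) = 0 then 0 else 1::nat) = 0
      then 0 else 1)"
    unfolding NB_def by (rule AndT_ok[OF t1 a2]) simp
  have all: "kleene (NB k mm) ?E ?fs Fs
     (if v1 = 0 \<and> (if (\<forall>i\<in>set [0..<k]. v2 i = 0) then 0 else 1::nat) = 0 \<and>
         v3 = 0 \<and> (if (\<forall>i\<in>set [0..<mm]. v4 i = 0) then 0 else 1::nat) = 0 then 0 else 1)"
  proof -
    have "(if v1 = 0 \<and> (if (if (\<forall>i\<in>set [0..<k]. v2 i = 0) then 0 else 1::nat) = 0 \<and>
       (if v3 = 0 \<and> (if (\<forall>i\<in>set [0..<mm]. v4 i = 0) then 0 else 1::nat) = 0 then 0 else 1::nat) = 0 then 0 else 1::nat) = 0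
      then 0 else 1::nat) = (if v1 = 0 \<and> (if (\<forall>i\<in>set [0..<k]. v2 i = 0) then 0 else 1::nat) = 0 \<and>
         v3 = 0 \<and> (if (\<forall>i\<in>set [0..<mm]. v4 i = 0) then 0 else 1::nat) = 0 then 0 else 1)"
      by (simp split: if_splits)
    then show ?thesis using a1 by simp
  qed
  have eq: "(v1 = 0 \<and> (if (\<forall>i\<in>set [0..<k]. v2 i = 0) then 0 else 1::nat) = 0 \<and>
         v3 = 0 \<and> (if (\<forall>i\<in>set [0..<mm]. v4 i = 0) then 0 else 1::nat) = 0) \<longleftrightarrow> (xs, pts) \<in> nbhd b"
  proof -
    have c1: "(v1 = 0 \<and> (\<forall>i\<in>set [0..<k]. v2 i = 0)) \<longleftrightarrow> xs = list_decode A"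
    proof
      assume h: "v1 = 0 \<and> (\<forall>i\<in>set [0..<k]. v2 i = 0)"
      then have l: "length (list_decode A) = k" by (simp add: v1_def split: if_splits)
      show "xs = list_decode A"
      proof (rule nth_equalityI)
        show "length xs = length (list_decode A)" using l lx by simp
        fix i assume "i < length xs"
        then have "i < k" "i < length (list_decode A)" using lx l by auto
        then show "xs ! i = list_decode A ! i" using h nth_dec[of i A]
          by (auto simp: v2_def split: if_splits)
      qed
    next
      assume h: "xs = list_decode A"
      then show "v1 = 0 \<and> (\<forall>i\<in>set [0..<k]. v2 i = 0)"
        using lx nth_dec[of _ A] by (auto simp: v1_def v2_def)
    qed
    have c2: "(v3 = 0 \<and> (\<forall>i\<in>set [0..<mm]. v4 i = 0)) \<longleftrightarrow>
       (length (list_decode B) = length pts \<and>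
        (\<forall>i<length pts. \<forall>j<length (list_decode (list_decode B ! i)).
             (pts ! i) j = list_decode (list_decode B ! i) ! j))"
    proof -
      have "D i = list_decode B ! i" if "length (list_decode B) = mm" "i < mm" for i
        unfolding D_def using that nth_dec[of i B] by simp
      then show ?thesis using lp nth_dec
        by (auto simp: v3_def v4_def split: if_splits)
    qed
    show ?thesis using c1 c2 by (auto simp: nbhd_def A_def B_def)
  qed
  show ?thesis using all eq by simp
qed



definition "XS off k = map (\<lambda>i. Pj (off + i)) [0..<k]"

lemma XS_ok: "length pre = off \<Longrightarrow> length xs = k \<Longrightarrow>
  list_all2 (\<lambda>t v. kleene t (pre @ xs @ tl') fs Fs v) (XS off k) xs"
  unfolding XS_def list_all2_conv_all_nth
  by (auto intro!: Pj_ok simp: nth_append)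

lemma CallXS_ok: "list_all2 (\<lambda>t v. kleene t E fs Fs v) ts vs \<Longrightarrow> length pre = off \<Longrightarrow> length xs = k \<Longrightarrow>
  E = pre @ xs @ tl' \<Longrightarrow> kleene g (vs @ xs @ E) fs Fs w \<Longrightarrow> kleene (Call (ts @ XS off k) g) E fs Fs w"
  by (rule Call_ok[where vs="vs @ xs"]) (auto intro!: list_all2_appendI XS_ok)

context
  fixes k mm :: nat
begin

definition "chP = Op2 APPC (Pj 2) (Pj 1)"
definition "fvP = Op1 (Ap 0) chP"
definition "testP = Call ([Op1 PDS fvP] @ XS 3 k) (NB k mm)"
definition "outP = IfZ (EqT (Op1 PDF fvP) (Kc 1)) (Kc 1) (Kc 0)"
definition "QP = IfZ testP outP (Call ([Pj 0, Pj 0, Op1 Sc (Pj 1), Pj 2] @ XS 3 k) Run)"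

lemma chP_ok: "kleene chP (y # n # list_encode \<sigma> # rest) fs Fs (list_encode (\<sigma> @ [n]))"
proof -
  have "kleene (Op2 APPC (Pj 2) (Pj 1)) (y # n # list_encode \<sigma> # rest) fs Fs (list_encode (list_decode (list_encode \<sigma>) @ [n]))"
    by (rule Op2_ok[OF Pj2 Pj1 APPC_ok])
  then show ?thesis unfolding chP_def by simp
qed

lemma fvP_ok: "kleene fvP (y # n # list_encode \<sigma> # rest) (f # pts) Fs (f (list_encode (\<sigma> @ [n])))"
  unfolding fvP_def by (rule Op1_ok[OF chP_ok Ap_ok]) auto

lemma testP_ok:
  assumes lx: "length xs = k" and lp: "length pts = mm"
  shows "kleene testP (y # n # list_encode \<sigma> # xs @ tail) (f # pts) Fs
    (if (xs, pts) \<in> leaf_nbhd f \<sigma> n then 0 else 1)"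
  unfolding testP_def leaf_nbhd_def
proof (rule CallXS_ok[where vs="[snd (prod_decode (f (list_encode (\<sigma> @ [n]))))]" and pre="[y, n, list_encode \<sigma>]" and xs=xs])
  show "list_all2 (\<lambda>t v. kleene t (y # n # list_encode \<sigma> # xs @ tail) (f # pts) Fs v) [Op1 PDS fvP]
     [snd (prod_decode (f (list_encode (\<sigma> @ [n]))))]"
    using Op1_ok[OF fvP_ok PDS_ok] by simp
  show "kleene (NB k mm) ([snd (prod_decode (f (list_encode (\<sigma> @ [n]))))] @ xs @ y # n # list_encode \<sigma> # xs @ tail) (f # pts) Fs
    (if (xs, pts) \<in> nbhd (snd (prod_decode (f (list_encode (\<sigma> @ [n]))))) then 0 else 1)"
    using NB_ok[OF lx lp] by simp
qed (use lx in simp_all)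

lemma outP_ok: "kleene outP (y # n # list_encode \<sigma> # rest) (f # pts) Fs
    (if leaf_bit f \<sigma> n = 1 then 1 else 0)"
  unfolding outP_def
  apply (rule IfZ_ok[OF EqT_ok[OF Op1_ok[OF fvP_ok PDF_ok] K_ok]])
  by (auto simp: leaf_bit_def K_ok split: if_splits)

lemma QP_ok:
  assumes lx: "length xs = k" and lp: "length pts = mm"
    and N: "(xs, pts) \<in> leaf_nbhd f \<sigma> N"
    and cons: "\<And>n. (xs, pts) \<in> leaf_nbhd f \<sigma> n \<Longrightarrow> leaf_bit f \<sigma> n = leaf_bit f \<sigma> N"
  shows "n \<le> N \<Longrightarrow> kleene QP (QP # n # list_encode \<sigma> # xs @ tail) (f # pts) Fs
     (if leaf_bit f \<sigma> N = 1 then 1 else 0)"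
proof (induction "N - n" arbitrary: n tail rule: less_induct)
  case less
  show ?case
  proof (rule kl_subst[OF _ QP_def[symmetric]], rule IfZ_ok[OF testP_ok[OF lx lp]])
    assume "(if (xs, pts) \<in> leaf_nbhd f \<sigma> n then 0 else 1::nat) = 0"
    then have "(xs, pts) \<in> leaf_nbhd f \<sigma> n" by (simp split: if_splits)
    then have e: "leaf_bit f \<sigma> n = leaf_bit f \<sigma> N" using cons by blast
    show "kleene outP (QP # n # list_encode \<sigma> # xs @ tail) (f # pts) Fs (if leaf_bit f \<sigma> N = 1 then 1 else 0)"
      using outP_ok[of QP n \<sigma> "xs @ tail" f pts Fs] unfolding e .
  next
    assume "(if (xs, pts) \<in> leaf_nbhd f \<sigma> n then 0 else 1::nat) \<noteq> 0"
    then have "(xs, pts) \<notin> leaf_nbhd f \<sigma> n" by (simp split: if_splits)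
    then have "n \<noteq> N" using N by auto
    then have lt: "N - Suc n < N - n" "Suc n \<le> N" using less.prems by auto
    let ?E = "QP # n # list_encode \<sigma> # xs @ tail"
    have r: "kleene QP (QP # Suc n # list_encode \<sigma> # xs @ ?E) (f # pts) Fs (if leaf_bit f \<sigma> N = 1 then 1 else 0)"
      using less.hyps[OF lt(1) lt(2)] by simp
    show "kleene (Call ([Pj 0, Pj 0, Op1 Sc (Pj 1), Pj 2] @ XS 3 k) Run) ?E (f # pts) Fs (if leaf_bit f \<sigma> N = 1 then 1 else 0)"
      apply (rule CallXS_ok[where vs="[QP, QP, Suc n, list_encode \<sigma>]" and pre="[QP, n, list_encode \<sigma>]" and xs=xs])
      using Op1_ok[OF Pj1 Sc_ok] apply (simp add: Pj0 Pj2)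
      using lx apply (simp_all split del: if_split)
      using Run_ok[OF r] by (simp split del: if_split)
  qed
qed

end



lemma node_take: "node f \<tau> \<Longrightarrow> node f (take n \<tau>)"
proof (induction arbitrary: n rule: node.induct)
  case root then show ?case by (simp add: node.root)
next
  case (compl \<sigma>)
  then show ?case by (cases "n \<le> length \<sigma>") (auto intro: node.compl)
next
  case (susl \<sigma> m)
  then show ?case by (cases "n \<le> length \<sigma>") (auto intro: node.susl)
qed

definition "childR f = {(\<tau>, \<sigma>). node f \<tau> \<and> (\<exists>a. \<tau> = \<sigma> @ [a])}"

lemma wf_childR:
  assumes nb: "\<not> (\<exists>g. \<forall>n. node f (map g [0..<n]))"
  shows "wf (childR f)"
proof (rule ccontr)
  assume "\<not> wf (childR f)"
  then obtain s where s: "\<And>i. (s (Suc i), s i) \<in> childR f"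
    unfolding wf_iff_no_infinite_down_chain by blast
  then have st: "\<And>i. \<exists>a. s (Suc i) = s i @ [a]" and sn: "\<And>i. node f (s (Suc i))"
    unfolding childR_def by auto
  have pre: "\<exists>ys. s (i + d) = s i @ ys \<and> length ys = d" for i d
  proof (induction d)
    case 0 then show ?case by simp
  next
    case (Suc d)
    then obtain ys where "s (i + d) = s i @ ys" "length ys = d" by blast
    moreover obtain a where "s (Suc (i + d)) = s (i + d) @ [a]" using st by blast
    ultimately show ?case by (intro exI[of _ "ys @ [a]"]) simp
  qed
  have len: "length (s i) = length (s 0) + i" for i
    using pre[of 0 i] by auto
  define g where "g j = s (Suc j) ! j" for j
  have "node f (map g [0..<n])" for n
  proof (cases n)
    case 0 then show ?thesis by (simp add: node.root)
  next
    case (Suc n')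
    have "map g [0..<n] = take n (s n)"
    proof (rule nth_equalityI)
      show "length (map g [0..<n]) = length (take n (s n))" using len[of n] by simp
      fix j assume "j < length (map g [0..<n])"
      then have j: "j < n" by simp
      obtain ys where "s (Suc j + (n - Suc j)) = s (Suc j) @ ys" using pre by blast
      then have e: "s n = s (Suc j) @ ys" using j by simp
      have "j < length (s (Suc j))" using len[of "Suc j"] by simp
      then show "map g [0..<n] ! j = take n (s n) ! j" using j e by (simp add: g_def nth_append)
    qed
    moreover have "node f (s n)" using sn[of n'] Suc by simp
    ultimately show ?thesis using node_take by metis
  qed
  then show False using nb by blast
qed

lemma code_induct[consumes 1, case_names nb step]:
  assumes nd: "node f \<sigma>" and nb: "\<not> (\<exists>g. \<forall>n. node f (map g [0..<n]))"
    and step: "\<And>\<sigma>. node f \<sigma> \<Longrightarrow> (\<And>a. node f (\<sigma> @ [a]) \<Longrightarrow> P (\<sigma> @ [a])) \<Longrightarrow> P \<sigma>"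
  shows "P \<sigma>"
  using nd
proof (induction \<sigma> rule: wf_induct[OF wf_childR[OF nb]])
  case (1 \<sigma>)
  show ?case
  proof (rule step[OF 1(2)])
    fix a assume "node f (\<sigma> @ [a])"
    then show "P (\<sigma> @ [a])" using 1(1) unfolding childR_def by blast
  qed
qed

lemma denotes_unique:
  assumes c: "is_code k cs f"
  shows "node f \<sigma> \<Longrightarrow> \<exists>!S. denotes k cs f \<sigma> S"
proof (induction \<sigma> rule: code_induct)
  case nb
  show ?case using c by (simp add: is_code_def)
next
  case (step \<sigma>)
  note nd = step(1) and IH = step(2)
  have lab: "lab f \<sigma> \<le> 2" using c nd by (simp add: is_code_def)
  consider (L0) "lab f \<sigma> = 0" | (L1) "lab f \<sigma> = 1" | (L2) "lab f \<sigma> = 2" using lab by linarith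
  then show ?case
  proof cases
    case L0
    show ?thesis
    proof (rule ex1I[of _ "clopen_of k cs f \<sigma>"])
      show "denotes k cs f \<sigma> (clopen_of k cs f \<sigma>)" by (rule denotes.leaf[OF L0])
      fix S assume "denotes k cs f \<sigma> S"
      then show "S = clopen_of k cs f \<sigma>" using L0 by (cases rule: denotes.cases) auto
    qed
  next
    case L2
    have ch: "node f (\<sigma> @ [list_encode s])" for s using nd L2 by (rule node.susl)
    then have "\<exists>!S. denotes k cs f (\<sigma> @ [list_encode s]) S" for s using IH by blast
    then obtain P where P: "\<And>s. denotes k cs f (\<sigma> @ [list_encode s]) (P s)"
      by metis
    show ?thesis
    proof (rule ex1I[of _ "suslin_op P"])
      show "denotes k cs f \<sigma> (suslin_op P)" by (rule denotes.susl[OF L2]) (use P in blast)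
      fix S assume "denotes k cs f \<sigma> S"
      then show "S = suslin_op P" using L2
      proof (cases rule: denotes.cases)
        case (susl P')
        have "P' s = P s" for s
        proof -
          have u: "\<exists>!S. denotes k cs f (\<sigma> @ [list_encode s]) S" using IH[of "list_encode s"] ch[of s] by blast
          show ?thesis using u susl(3) P[of s] by blast
        qed
        then have "P' = P" by (simp add: fun_eq_iff)
        then show ?thesis using susl by simp
      qed auto
    qed
  next
    case L1
    have ch: "node f (\<sigma> @ [0])" using nd L1 by (rule node.compl)
    have u: "\<exists>!S. denotes k cs f (\<sigma> @ [0]) S" using IH[of 0] ch by blast
    then obtain S0 where S0: "denotes k cs f (\<sigma> @ [0]) S0" by blast
    show ?thesis
    proof (rule ex1I[of _ "X_space k cs - S0"])
      show "denotes k cs f \<sigma> (X_space k cs - S0)" by (rule denotes.compl[OF L1 S0])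
      fix S assume "denotes k cs f \<sigma> S"
      then show "S = X_space k cs - S0" using L1
      proof (cases rule: denotes.cases)
        case (compl S')
        then show ?thesis using S0 u by blast
      qed auto
    qed
  qed
qed



definition "labP = Op1 (Ap 0) (Pj 1)"
definition "LEAFP k mm = Call ([Kc (QP k mm), Kc 0, Pj 1] @ XS 2 k) (QP k mm)"
definition "COMPLP k = Op2 SubP (Kc 1) (Call ([Pj 0, Pj 0, Op2 APPC (Pj 1) (Kc 0)] @ XS 2 k) Run)"
definition "E1P k = Call ([Pj 1, Pj 1, Op2 APPC (Pj 2) (Pj 0)] @ XS 3 k) Run"
definition "MP k mm = IfZ labP (LEAFP k mm) (IfZ (Op1 PredP labP) (COMPLP k) (SP (E1P k)))"
definition "TOP k mm = Call ([Kc (MP k mm), Kc 0] @ XS 0 k) (MP k mm)"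

lemma labP_ok: "kleene labP (y # list_encode \<sigma> # rest) (f # pts) Fs (lab f \<sigma>)"
  unfolding labP_def lab_def by (rule Op1_ok[OF Pj1 Ap_ok]) auto

lemma leaf_case:
  assumes v: "valid_clopen k cs f \<sigma>" and x: "(xs, pts) \<in> X_space k cs"
  shows "kleene (LEAFP k (length cs)) (y # list_encode \<sigma> # xs @ tail) (f # pts) Fs
    (if (xs, pts) \<in> clopen_of k cs f \<sigma> then 1 else 0)"
proof -
  have lx: "length xs = k" and lp: "length pts = length cs" using x by (auto simp: X_space_def)
  obtain N where N: "(xs, pts) \<in> leaf_nbhd f \<sigma> N" using v x by (auto simp: valid_clopen_def)
  have cons: "\<And>n. (xs, pts) \<in> leaf_nbhd f \<sigma> n \<Longrightarrow> leaf_bit f \<sigma> n = leaf_bit f \<sigma> N"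
  proof -
    fix n assume "(xs, pts) \<in> leaf_nbhd f \<sigma> n"
    moreover have "\<forall>n m. (xs, pts) \<in> leaf_nbhd f \<sigma> n \<and> (xs, pts) \<in> leaf_nbhd f \<sigma> m
         \<longrightarrow> leaf_bit f \<sigma> n = leaf_bit f \<sigma> m" using v x unfolding valid_clopen_def by blast
    ultimately show "leaf_bit f \<sigma> n = leaf_bit f \<sigma> N" using N by blast
  qed
  have iff: "(xs, pts) \<in> clopen_of k cs f \<sigma> \<longleftrightarrow> leaf_bit f \<sigma> N = 1"
  proof
    assume "(xs, pts) \<in> clopen_of k cs f \<sigma>"
    then obtain n where "(xs, pts) \<in> leaf_nbhd f \<sigma> n" "leaf_bit f \<sigma> n = 1"
      unfolding clopen_of_def by blast
    then show "leaf_bit f \<sigma> N = 1" using cons by metis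
  next
    assume "leaf_bit f \<sigma> N = 1"
    then show "(xs, pts) \<in> clopen_of k cs f \<sigma>" unfolding clopen_of_def using x N by blast
  qed
  let ?E = "y # list_encode \<sigma> # xs @ tail"
  have q: "kleene (QP k (length cs)) (QP k (length cs) # 0 # list_encode \<sigma> # xs @ ?E) (f # pts) Fs
     (if leaf_bit f \<sigma> N = 1 then 1 else 0)"
    by (rule QP_ok[OF lx lp N cons]) auto
  show ?thesis unfolding LEAFP_def
    apply (rule CallXS_ok[where vs="[QP k (length cs), 0, list_encode \<sigma>]" and pre="[y, list_encode \<sigma>]" and xs=xs])
    using K_ok Pj1 apply (simp add: )
    using lx apply (simp_all split del: if_split)
    using q iff by simp
qed

lemma suslin_S_val: "suslin_S (\<lambda>m. if x \<in> P (list_decode m) then 1 else 0) = (if x \<in> suslin_op P then 1 else 0)"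
  unfolding suslin_S_def suslin_op_def seqcode_def by auto

lemma MP_ok:
  assumes c: "is_code k cs f"
  shows "node f \<sigma> \<Longrightarrow> denotes k cs f \<sigma> S \<Longrightarrow> (xs, pts) \<in> X_space k cs \<Longrightarrow>
    kleene (MP k (length cs)) (MP k (length cs) # list_encode \<sigma> # xs @ tail) (f # pts) [suslin_S]
      (if (xs, pts) \<in> S then 1 else 0)"
proof (induction \<sigma> arbitrary: S xs pts tail rule: code_induct)
  case nb
  show ?case using c by (simp add: is_code_def)
next
  case (step \<sigma>)
  note nd = step(1) and IH = step(2) and den = step(3) and x = step(4)
  let ?M = "MP k (length cs)"
  let ?E = "?M # list_encode \<sigma> # xs @ tail"
  have lx: "length xs = k" and lp: "length pts = length cs" using x by (auto simp: X_space_def)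
  have lab: "lab f \<sigma> \<le> 2" using c nd by (simp add: is_code_def)
  show ?case
  proof (rule kl_subst[OF _ MP_def[symmetric]], rule IfZ_ok[OF labP_ok])
    assume l0: "lab f \<sigma> = 0"
    then have v: "valid_clopen k cs f \<sigma>" using c nd by (simp add: is_code_def)
    from den l0 have "S = clopen_of k cs f \<sigma>" by (cases rule: denotes.cases) auto
    then show "kleene (LEAFP k (length cs)) ?E (f # pts) [suslin_S] (if (xs, pts) \<in> S then 1 else 0)"
      using leaf_case[OF v x] by simp
  next
    assume l0: "lab f \<sigma> \<noteq> 0"
    show "kleene (IfZ (Op1 PredP labP) (COMPLP k) (SP (E1P k))) ?E (f # pts) [suslin_S] (if (xs, pts) \<in> S then 1 else 0)"
    proof (rule IfZ_ok[OF Op1_ok[OF labP_ok Pred_ok]])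
      assume "lab f \<sigma> - 1 = 0"
      then have l1: "lab f \<sigma> = 1" using l0 by simp
      have ch: "node f (\<sigma> @ [0])" using nd l1 by (rule node.compl)
      from den l1 obtain S' where S': "denotes k cs f (\<sigma> @ [0]) S'" and SS: "S = X_space k cs - S'"
        by (cases rule: denotes.cases) auto
      have r: "kleene ?M (?M # list_encode (\<sigma> @ [0]) # xs @ ?E) (f # pts) [suslin_S] (if (xs, pts) \<in> S' then 1 else 0)"
        using IH[OF ch S' x] .
      have app: "kleene (Op2 APPC (Pj 1) (Kc 0)) ?E (f # pts) [suslin_S] (list_encode (\<sigma> @ [0]))"
      proof -
        have "kleene (Op2 APPC (Pj 1) (Kc 0)) ?E (f # pts) [suslin_S] (list_encode (list_decode (list_encode \<sigma>) @ [0]))"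
          by (rule Op2_ok[OF Pj1 K_ok APPC_ok])
        then show ?thesis by simp
      qed
      have cl: "kleene (Call ([Pj 0, Pj 0, Op2 APPC (Pj 1) (Kc 0)] @ XS 2 k) Run) ?E (f # pts) [suslin_S]
          (if (xs, pts) \<in> S' then 1 else 0)"
        apply (rule CallXS_ok[where vs="[?M, ?M, list_encode (\<sigma> @ [0])]" and pre="[?M, list_encode \<sigma>]" and xs=xs])
        using app apply (simp add: Pj0)
        using lx apply (simp_all split del: if_split)
        using Run_ok[OF r] by (simp split del: if_split)
      have "kleene (COMPLP k) ?E (f # pts) [suslin_S] (1 - (if (xs, pts) \<in> S' then 1 else 0))"
        unfolding COMPLP_def by (rule Op2_ok[OF K_ok cl SubP_ok])
      then show "kleene (COMPLP k) ?E (f # pts) [suslin_S] (if (xs, pts) \<in> S then 1 else 0)"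
      proof -
        have "(1 - (if (xs, pts) \<in> S' then 1 else 0::nat)) = (if (xs, pts) \<in> S then 1 else 0)"
          using SS x by auto
        then show ?thesis using \<open>kleene (COMPLP k) ?E (f # pts) [suslin_S] (1 - (if (xs, pts) \<in> S' then 1 else 0))\<close>
          by metis
      qed
    next
      assume "lab f \<sigma> - 1 \<noteq> 0"
      then have l2: "lab f \<sigma> = 2" using lab by simp
      have ch: "node f (\<sigma> @ [m])" for m using nd l2 by (rule node.susl)
      from den l2 obtain P where P: "\<And>s. denotes k cs f (\<sigma> @ [list_encode s]) (P s)" and SS: "S = suslin_op P"
        by (cases rule: denotes.cases) auto
      have e1: "kleene (E1P k) (m # ?E) (f # pts) [suslin_S] (if (xs, pts) \<in> P (list_decode m) then 1 else 0)" for m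
      proof -
        have P': "denotes k cs f (\<sigma> @ [m]) (P (list_decode m))" using P[of "list_decode m"] by simp
        have r: "kleene ?M (?M # list_encode (\<sigma> @ [m]) # xs @ m # ?E) (f # pts) [suslin_S]
           (if (xs, pts) \<in> P (list_decode m) then 1 else 0)"
          using IH[OF ch P' x] .
        have app: "kleene (Op2 APPC (Pj 2) (Pj 0)) (m # ?E) (f # pts) [suslin_S] (list_encode (\<sigma> @ [m]))"
        proof -
          have "kleene (Op2 APPC (Pj 2) (Pj 0)) (m # ?E) (f # pts) [suslin_S] (list_encode (list_decode (list_encode \<sigma>) @ [m]))"
            by (rule Op2_ok[OF Pj2 Pj0 APPC_ok])
          then show ?thesis by simp
        qed
        show ?thesis unfolding E1P_def
          apply (rule CallXS_ok[where vs="[?M, ?M, list_encode (\<sigma> @ [m])]" and pre="[m, ?M, list_encode \<sigma>]" and xs=xs])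
          apply (simp only: list_all2_Cons list_all2_Nil) using app Pj1 apply blast
          using lx apply (simp_all split del: if_split)
          using Run_ok[OF r] by (simp split del: if_split)
      qed
      have "kleene (SP (E1P k)) ?E (f # pts) [suslin_S] (suslin_S (\<lambda>m. if (xs, pts) \<in> P (list_decode m) then 1 else 0))"
        by (rule SP_ok) (rule e1)
      then show "kleene (SP (E1P k)) ?E (f # pts) [suslin_S] (if (xs, pts) \<in> S then 1 else 0)"
        unfolding suslin_S_val SS .
    qed
  qed
qed



theorem mainTheorem3:
  fixes k :: nat and cs :: "bool list"
  shows "\<exists>e. \<forall>f. is_code k cs f \<longrightarrow>
           (\<forall>x\<in>X_space k cs.
              kleene e (fst x) (f # snd x) [suslin_S]
                (if x \<in> coded_set k cs f then 1 else 0))"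
proof (intro exI[of _ "TOP k (length cs)"] allI impI ballI)
  fix f x assume c: "is_code k cs f" and x: "x \<in> X_space k cs"
  obtain xs pts where xp: "x = (xs, pts)" by (cases x)
  have lx: "length xs = k" using x xp by (auto simp: X_space_def)
  have "\<exists>!S. denotes k cs f [] S" by (rule denotes_unique[OF c node.root])
  then have den: "denotes k cs f [] (coded_set k cs f)" unfolding coded_set_def by (rule theI')
  let ?M = "MP k (length cs)"
  have r: "kleene ?M (?M # list_encode [] # xs @ xs) (f # pts) [suslin_S]
     (if (xs, pts) \<in> coded_set k cs f then 1 else 0)"
    by (rule MP_ok[OF c node.root den]) (use x xp in simp)
  have "kleene (TOP k (length cs)) xs (f # pts) [suslin_S] (if (xs, pts) \<in> coded_set k cs f then 1 else 0)"
    unfolding TOP_def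
    apply (rule CallXS_ok[where vs="[?M, 0]" and pre="[]" and xs=xs and tl'="[]"])
    apply (simp add: K_ok)
    using lx apply (simp_all split del: if_split)
    using r by (simp split del: if_split)
  then show "kleene (TOP k (length cs)) (fst x) (f # snd x) [suslin_S] (if x \<in> coded_set k cs f then 1 else 0)"
    using xp by simp
qed


end
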